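(* Let $G$ be a finite connected graph with a real structure and let $D_1,D_2$ be two linearly equivalent real divisors on $G$. Let $G'$ be a connected component of $G(\mathbb R)$. Then $\deg(D_1|_{G'})\equiv\deg(D_2|_{G'})\pmod 2$, where $\deg(D|_{G'})=\sum_{v\in V(G')}D(v)$.
   Context: A finite graph $G$ has vertex set $V(G)$, edge set $E(G)$ and incidence function $\psi$ assigning to each edge a set of one or two vertices (loops and multiple edges allowed). A real structure on $G$ is a pair of involutions of $V(G)$ and $E(G)$, written $v\mapsto\overline v$, $e\mapsto\overline e$, with $\psi(\overline e)=\overline{\psi(e)}$. A vertex/edge is real if fixed by the involution; a real edge $e$ is non-isolated if both ends are real vertices. $G(\mathbb R)$ is the subgraph whose vertices are the real vertices and whose edges are the non-isolated real edges. A divisor is a formal $\mathbb Z$-combination $D=\sum_vD(v)v$ of vertices; $\overline D(v)=D(\overline v)$ and $D$ is real if $\overline D=D$. For $f:V(G)\to\mathbb Z$, $\Delta(f)(v)=\sum_{e\in E(G),\,\psi(e)=\{v,w\}}(f(w)-f(v))$; $D_1\sim D_2$ iff $D_2-D_1=\Delta(f)$ for some $f$. *)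

theory Defs
  imports Main "HOL-Number_Theory.Cong"
begin

text \<open>A finite graph (loops and multiple edges allowed): vertex set V, edge set E,
  incidence function psi assigning to each edge a set of one or two vertices.\<close>
definition graph :: "'v set \<Rightarrow> 'e set \<Rightarrow> ('e \<Rightarrow> 'v set) \<Rightarrow> bool" where
  "graph V E psi \<longleftrightarrow> finite V \<and> finite E \<and>
     (\<forall>e\<in>E. psi e \<subseteq> V \<and> (card (psi e) = 1 \<or> card (psi e) = 2))"

definition adj :: "'v set \<Rightarrow> 'e set \<Rightarrow> ('e \<Rightarrow> 'v set) \<Rightarrow> ('v \<times> 'v) set" where
  "adj V E psi = {(v, w). v \<in> V \<and> w \<in> V \<and> (\<exists>e\<in>E. psi e = {v, w})}"

definition connected_graph :: "'v set \<Rightarrow> 'e set \<Rightarrow> ('e \<Rightarrow> 'v set) \<Rightarrow> bool" where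
  "connected_graph V E psi \<longleftrightarrow> graph V E psi \<and> V \<noteq> {} \<and>
     (\<forall>v\<in>V. \<forall>w\<in>V. (v, w) \<in> (adj V E psi)\<^sup>*)"

definition real_structure ::
  "'v set \<Rightarrow> 'e set \<Rightarrow> ('e \<Rightarrow> 'v set) \<Rightarrow> ('v \<Rightarrow> 'v) \<Rightarrow> ('e \<Rightarrow> 'e) \<Rightarrow> bool" where
  "real_structure V E psi sigma tau \<longleftrightarrow>
     (\<forall>v\<in>V. sigma v \<in> V \<and> sigma (sigma v) = v) \<and>
     (\<forall>e\<in>E. tau e \<in> E \<and> tau (tau e) = e) \<and>
     (\<forall>e\<in>E. psi (tau e) = sigma ` psi e)"

definition real_vertices :: "'v set \<Rightarrow> ('v \<Rightarrow> 'v) \<Rightarrow> 'v set" where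
  "real_vertices V sigma = {v\<in>V. sigma v = v}"

definition real_edges ::
  "'v set \<Rightarrow> 'e set \<Rightarrow> ('e \<Rightarrow> 'v set) \<Rightarrow> ('v \<Rightarrow> 'v) \<Rightarrow> ('e \<Rightarrow> 'e) \<Rightarrow> 'e set" where
  "real_edges V E psi sigma tau =
     {e\<in>E. tau e = e \<and> psi e \<subseteq> real_vertices V sigma}"

definition real_components ::
  "'v set \<Rightarrow> 'e set \<Rightarrow> ('e \<Rightarrow> 'v set) \<Rightarrow> ('v \<Rightarrow> 'v) \<Rightarrow> ('e \<Rightarrow> 'e) \<Rightarrow> 'v set set" where
  "real_components V E psi sigma tau =
     (let RV = real_vertices V sigma; RE = real_edges V E psi sigma tau in
      {{w\<in>RV. (v, w) \<in> (adj RV RE psi)\<^sup>*} | v. v \<in> RV})"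

text \<open>Divisors are functions 'v => int (only values on V matter).\<close>
definition real_divisor :: "'v set \<Rightarrow> ('v \<Rightarrow> 'v) \<Rightarrow> ('v \<Rightarrow> int) \<Rightarrow> bool" where
  "real_divisor V sigma D \<longleftrightarrow> (\<forall>v\<in>V. D (sigma v) = D v)"

text \<open>Laplacian: sum over edges e with psi e = {v,w} of f w - f v (loops contribute 0).\<close>
definition laplacian ::
  "'e set \<Rightarrow> ('e \<Rightarrow> 'v set) \<Rightarrow> ('v \<Rightarrow> int) \<Rightarrow> 'v \<Rightarrow> int" where
  "laplacian E psi f v = (\<Sum>e\<in>{e\<in>E. v \<in> psi e}. \<Sum>w\<in>psi e - {v}. f w - f v)"

definition lin_equiv ::
  "'v set \<Rightarrow> 'e set \<Rightarrow> ('e \<Rightarrow> 'v set) \<Rightarrow> ('v \<Rightarrow> int) \<Rightarrow> ('v \<Rightarrow> int) \<Rightarrow> bool" where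
  "lin_equiv V E psi D1 D2 \<longleftrightarrow>
     (\<exists>f :: 'v \<Rightarrow> int. \<forall>v\<in>V. D2 v - D1 v = laplacian E psi f v)"

end

theory Submission
  imports Defs
begin

lemma lap_diff:
  "laplacian E psi (\<lambda>x. f x - g x) v = laplacian E psi f v - laplacian E psi g v"
  unfolding laplacian_def sum_subtractf[symmetric] by (intro sum.cong refl) (simp add: algebra_simps)

lemma lap_sigma:
  assumes G: "graph V E psi" and R: "real_structure V E psi sigma tau" and v: "v \<in> V"
  shows "laplacian E psi (\<lambda>x. f (sigma x)) v = laplacian E psi f (sigma v)"
proof -
  have sV: "\<And>x. x \<in> V \<Longrightarrow> sigma x \<in> V \<and> sigma (sigma x) = x" using R unfolding real_structure_def by blast
  have tE: "\<And>e. e \<in> E \<Longrightarrow> tau e \<in> E \<and> tau (tau e) = e" using R unfolding real_structure_def by blast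
  have pt: "\<And>e. e \<in> E \<Longrightarrow> psi (tau e) = sigma ` psi e" using R unfolding real_structure_def by blast
  have pV: "\<And>e. e \<in> E \<Longrightarrow> psi e \<subseteq> V" using G unfolding graph_def by blast
  have injV: "inj_on sigma V" by (metis inj_onI sV)
  have eqv: "\<And>e. e \<in> E \<Longrightarrow> sigma v \<in> psi (tau e) \<longleftrightarrow> v \<in> psi e"
  proof -
    fix e assume e: "e \<in> E"
    show "sigma v \<in> psi (tau e) \<longleftrightarrow> v \<in> psi e"
      unfolding pt[OF e] using injV pV[OF e] v by (auto simp: inj_on_def)
  qed
  have setq: "{e\<in>E. sigma v \<in> psi e} = tau ` {e\<in>E. v \<in> psi e}"
  proof
    show "tau ` {e\<in>E. v \<in> psi e} \<subseteq> {e\<in>E. sigma v \<in> psi e}" using tE eqv by auto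
  next
    show "{e\<in>E. sigma v \<in> psi e} \<subseteq> tau ` {e\<in>E. v \<in> psi e}"
    proof
      fix e assume "e \<in> {e\<in>E. sigma v \<in> psi e}"
      then have e: "e \<in> E" "sigma v \<in> psi e" by auto
      have "sigma v \<in> psi (tau (tau e))" using tE[OF e(1)] e by simp
      then have "v \<in> psi (tau e)" using eqv tE e(1) by blast
      then show "e \<in> tau ` {e\<in>E. v \<in> psi e}" using tE[OF e(1)] by (metis (mono_tags, lifting) image_eqI mem_Collect_eq)
    qed
  qed
  have injt: "inj_on tau {e\<in>E. v \<in> psi e}" by (rule inj_onI) (metis mem_Collect_eq tE)
  have inner: "(\<Sum>w\<in>psi (tau e) - {sigma v}. f w - f (sigma v)) = (\<Sum>w\<in>psi e - {v}. f (sigma w) - f (sigma v))"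
    if e: "e \<in> E" for e
  proof -
    have "psi (tau e) - {sigma v} = sigma ` (psi e - {v})"
      unfolding pt[OF e] using injV pV[OF e] v by (auto simp: inj_on_def)
    moreover have "inj_on sigma (psi e - {v})" using injV pV[OF e] by (meson Diff_subset inj_on_subset subset_trans)
    ultimately show ?thesis by (simp add: sum.reindex)
  qed
  have "laplacian E psi f (sigma v) = (\<Sum>e\<in>tau ` {e\<in>E. v \<in> psi e}. \<Sum>w\<in>psi e - {sigma v}. f w - f (sigma v))"
    unfolding laplacian_def setq ..
  also have "\<dots> = (\<Sum>e\<in>{e\<in>E. v \<in> psi e}. \<Sum>w\<in>psi (tau e) - {sigma v}. f w - f (sigma v))"
    using injt by (simp add: sum.reindex)
  also have "\<dots> = laplacian E psi (\<lambda>x. f (sigma x)) v"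
    unfolding laplacian_def by (rule sum.cong) (auto simp: inner)
  finally show ?thesis by simp
qed

lemma harmonic_const:
  assumes C: "connected_graph V E psi" and H: "\<forall>v\<in>V. laplacian E psi g v = 0"
    and v: "v \<in> V" and w: "w \<in> V"
  shows "g v = g w"
proof -
  have G: "graph V E psi" and ne: "V \<noteq> {}" and conn: "\<forall>v\<in>V. \<forall>w\<in>V. (v, w) \<in> (adj V E psi)\<^sup>*"
    using C unfolding connected_graph_def by auto
  have fin: "finite V" using G unfolding graph_def by auto
  have pV: "\<And>e. e \<in> E \<Longrightarrow> psi e \<subseteq> V" using G unfolding graph_def by blast
  define M where "M = Max (g ` V)"
  have le: "\<And>u. u \<in> V \<Longrightarrow> g u \<le> M" unfolding M_def using fin by auto
  obtain v0 where v0: "v0 \<in> V" "g v0 = M" unfolding M_def using fin ne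
    by (metis (mono_tags, lifting) Max_in empty_is_image finite_imageI imageE)
  have adjstep: "g x = M" if u: "g u = M" and a: "(u, x) \<in> adj V E psi" for u x
  proof -
    from a obtain e where uV: "u \<in> V" and xV: "x \<in> V" and e: "e \<in> E" "psi e = {u, x}"
      unfolding adj_def by auto
    show ?thesis
    proof (cases "x = u")
      case True then show ?thesis using u by simp
    next
      case False
      have fe: "\<And>e. e \<in> E \<Longrightarrow> finite (psi e)" using pV fin by (meson finite_subset)
      have "laplacian E psi g u = 0" using H uV by auto
      then have "(\<Sum>e\<in>{e\<in>E. u \<in> psi e}. \<Sum>w\<in>psi e - {u}. g u - g w) = 0"
        unfolding laplacian_def by (simp add: sum_negf[symmetric] sum_subtractf)
      moreover have nn: "\<And>e w. e \<in> E \<Longrightarrow> w \<in> psi e \<Longrightarrow> 0 \<le> g u - g w" using le u pV by fastforce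
      ultimately have "\<forall>e\<in>{e\<in>E. u \<in> psi e}. (\<Sum>w\<in>psi e - {u}. g u - g w) = 0"
        using G unfolding graph_def by (subst sum_nonneg_eq_0_iff[symmetric]) (auto intro!: sum_nonneg)
      then have "(\<Sum>w\<in>psi e - {u}. g u - g w) = 0" using e by auto
      then have "\<forall>w\<in>psi e - {u}. g u - g w = 0"
        using fe[OF e(1)] nn e(1) by (subst sum_nonneg_eq_0_iff[symmetric]) auto
      then show ?thesis using e False u by auto
    qed
  qed
  have all: "g x = M" if "(v0, x) \<in> (adj V E psi)\<^sup>*" for x
    using that
  proof (induction rule: rtrancl_induct)
    case base then show ?case using v0 by simp
  next
    case (step y z) then show ?case using adjstep by blast
  qed
  have "g v = M" using all conn v0(1) v by blast
  moreover have "g w = M" using all conn v0(1) w by blast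
  ultimately show ?thesis by simp
qed

lemma even_sum_inv:
  fixes h :: "'e \<Rightarrow> int"
  assumes "finite E" "\<forall>e\<in>E. tau e \<in> E \<and> tau (tau e) = e" "\<forall>e\<in>E. h (tau e) = h e"
    "\<forall>e\<in>E. tau e = e \<longrightarrow> h e = 0"
  shows "even (sum h E)"
  using assms
proof (induction "card E" arbitrary: E rule: less_induct)
  case less
  have fin: "finite E" and inv: "\<And>x. x \<in> E \<Longrightarrow> tau x \<in> E \<and> tau (tau x) = x"
    and hs: "\<And>x. x \<in> E \<Longrightarrow> h (tau x) = h x"
    and h0: "\<And>x. x \<in> E \<Longrightarrow> tau x = x \<Longrightarrow> h x = 0" using less.prems by auto
  show ?case
  proof (cases "E = {}")
    case True then show ?thesis by simp
  next
    case False
    then obtain e where e: "e \<in> E" by auto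
    show ?thesis
    proof (cases "tau e = e")
      case True
      let ?E = "E - {e}"
      have cl: "\<forall>x\<in>?E. tau x \<in> ?E \<and> tau (tau x) = x"
      proof
        fix x assume x: "x \<in> ?E"
        then have "x \<in> E" "x \<noteq> e" by auto
        moreover have "tau x \<noteq> e"
        proof
          assume "tau x = e"
          then have "tau (tau x) = tau e" by simp
          then show False using inv[OF \<open>x \<in> E\<close>] True \<open>x \<noteq> e\<close> by simp
        qed
        ultimately show "tau x \<in> ?E \<and> tau (tau x) = x" using inv by auto
      qed
      have "even (sum h ?E)"
      proof (rule less.hyps)
        show "card ?E < card E" using fin e by (rule card_Diff1_less)
        show "finite ?E" using fin by simp
        show "\<forall>x\<in>?E. tau x \<in> ?E \<and> tau (tau x) = x" by (rule cl)
        show "\<forall>x\<in>?E. h (tau x) = h x" using hs by simp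
        show "\<forall>x\<in>?E. tau x = x \<longrightarrow> h x = 0" using h0 by simp
      qed
      moreover have "sum h E = h e + sum h ?E" using fin e by (simp add: sum.remove)
      ultimately show ?thesis using h0[OF e True] by simp
    next
      case False
      let ?E = "E - {e, tau e}"
      have te: "tau e \<in> E" using inv[OF e] by simp
      have cl: "\<forall>x\<in>?E. tau x \<in> ?E \<and> tau (tau x) = x"
      proof
        fix x assume x: "x \<in> ?E"
        then have xE: "x \<in> E" and "x \<noteq> e" "x \<noteq> tau e" by auto
        have ii: "tau (tau x) = x" "tau (tau e) = e" using inv xE e by auto
        have "tau x \<noteq> e" using ii \<open>x \<noteq> tau e\<close> by metis
        moreover have "tau x \<noteq> tau e" using ii \<open>x \<noteq> e\<close> by metis
        ultimately show "tau x \<in> ?E \<and> tau (tau x) = x" using inv[OF xE] by auto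
      qed
      have sub: "?E \<subset> E" using e by auto
      have "even (sum h ?E)"
      proof (rule less.hyps)
        show "card ?E < card E" using fin sub by (rule psubset_card_mono)
        show "finite ?E" using fin by simp
        show "\<forall>x\<in>?E. tau x \<in> ?E \<and> tau (tau x) = x" by (rule cl)
        show "\<forall>x\<in>?E. h (tau x) = h x" using hs by simp
        show "\<forall>x\<in>?E. tau x = x \<longrightarrow> h x = 0" using h0 by simp
      qed
      moreover have "sum h E = h e + sum h (E - {e})" using fin e by (simp add: sum.remove)
      moreover have "sum h (E - {e}) = h (tau e) + sum h (E - {e} - {tau e})"
        using fin te False by (intro sum.remove) auto
      moreover have "E - {e} - {tau e} = ?E" by auto
      ultimately show ?thesis using hs[OF e] by simp
    qed
  qed
qed

theorem theorem2:
  fixes V :: "'v set" and E :: "'e set" and psi :: "'e \<Rightarrow> 'v set"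
    and sigma :: "'v \<Rightarrow> 'v" and tau :: "'e \<Rightarrow> 'e"
    and D1 D2 :: "'v \<Rightarrow> int" and C :: "'v set"
  assumes "connected_graph V E psi"
    and "real_structure V E psi sigma tau"
    and "real_divisor V sigma D1" and "real_divisor V sigma D2"
    and "lin_equiv V E psi D1 D2"
    and "C \<in> real_components V E psi sigma tau"
  shows "[(\<Sum>v\<in>C. D1 v) = (\<Sum>v\<in>C. D2 v)] (mod 2)"
proof -
  note A = assms
  have G: "graph V E psi" using A(1) unfolding connected_graph_def by auto
  have finV: "finite V" and finE: "finite E" using G unfolding graph_def by auto
  have pV: "\<And>e. e \<in> E \<Longrightarrow> psi e \<subseteq> V" using G unfolding graph_def by blast
  have pc: "\<And>e. e \<in> E \<Longrightarrow> card (psi e) = 1 \<or> card (psi e) = 2" using G unfolding graph_def by blast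
  have sV: "\<And>x. x \<in> V \<Longrightarrow> sigma x \<in> V \<and> sigma (sigma x) = x" using A(2) unfolding real_structure_def by blast
  have tE: "\<And>e. e \<in> E \<Longrightarrow> tau e \<in> E \<and> tau (tau e) = e" using A(2) unfolding real_structure_def by blast
  have pt: "\<And>e. e \<in> E \<Longrightarrow> psi (tau e) = sigma ` psi e" using A(2) unfolding real_structure_def by blast
  have injV: "inj_on sigma V" by (metis inj_onI sV)
  obtain f where hf: "\<forall>v\<in>V. D2 v - D1 v = laplacian E psi f v" using A(5) unfolding lin_equiv_def by blast
  define g where "g = (\<lambda>x. f x - f (sigma x))"
  have harm: "\<forall>v\<in>V. laplacian E psi g v = 0"
  proof
    fix v assume v: "v \<in> V"
    have "laplacian E psi g v = laplacian E psi f v - laplacian E psi (\<lambda>x. f (sigma x)) v"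
      unfolding g_def by (rule lap_diff)
    also have "\<dots> = laplacian E psi f v - laplacian E psi f (sigma v)"
      using lap_sigma[OF G A(2) v] by simp
    also have "\<dots> = 0"
    proof -
      have "laplacian E psi f v = D2 v - D1 v" using hf v by auto
      moreover have "laplacian E psi f (sigma v) = D2 (sigma v) - D1 (sigma v)" using hf sV[OF v] by auto
      moreover have "D2 (sigma v) = D2 v" "D1 (sigma v) = D1 v" using A(3,4) v unfolding real_divisor_def by auto
      ultimately show ?thesis by simp
    qed
    finally show "laplacian E psi g v = 0" .
  qed
  have freal: "f (sigma v) = f v" if v: "v \<in> V" for v
  proof -
    have "g (sigma v) = g v" using harmonic_const[OF A(1) harm] v sV by blast
    moreover have "g (sigma v) = - g v" unfolding g_def using sV[OF v] by simp
    ultimately show ?thesis unfolding g_def by simp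
  qed
  define RV where "RV = real_vertices V sigma"
  define RE where "RE = real_edges V E psi sigma tau"
  obtain v0 where v0: "v0 \<in> RV" and Cdef: "C = {w\<in>RV. (v0, w) \<in> (adj RV RE psi)\<^sup>*}"
    using A(6) unfolding real_components_def RV_def RE_def Let_def by blast
  have CRV: "C \<subseteq> RV" using Cdef by auto
  have RVV: "RV \<subseteq> V" unfolding RV_def real_vertices_def by auto
  have Creal: "\<And>c. c \<in> C \<Longrightarrow> sigma c = c" using CRV unfolding RV_def real_vertices_def by auto
  have finC: "finite C" using CRV RVV finV by (meson finite_subset subset_trans)
  define h where "h = (\<lambda>e. \<Sum>v\<in>{v\<in>C. v \<in> psi e}. \<Sum>w\<in>psi e - {v}. f w - f v)"
  have "(\<Sum>v\<in>C. D2 v) - (\<Sum>v\<in>C. D1 v) = (\<Sum>v\<in>C. laplacian E psi f v)"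
    unfolding sum_subtractf[symmetric] using hf CRV RVV by (intro sum.cong) auto
  also have "\<dots> = sum h E"
    unfolding laplacian_def h_def by (rule sum.swap_restrict[OF finC finE])
  finally have eqs: "(\<Sum>v\<in>C. D2 v) - (\<Sum>v\<in>C. D1 v) = sum h E" .
  have hinv: "h (tau e) = h e" if e: "e \<in> E" for e
  proof -
    have s1: "{v\<in>C. v \<in> psi (tau e)} = {v\<in>C. v \<in> psi e}"
    proof -
      have "v \<in> sigma ` psi e \<longleftrightarrow> v \<in> psi e" if "v \<in> C" for v
      proof -
        have vV: "v \<in> V" using that CRV RVV by auto
        have "v \<in> sigma ` psi e \<longleftrightarrow> sigma v \<in> sigma ` psi e" using Creal that by simp
        also have "\<dots> \<longleftrightarrow> v \<in> psi e" using injV pV[OF e] vV by (auto simp: inj_on_def)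
        finally show ?thesis .
      qed
      then show ?thesis unfolding pt[OF e] by auto
    qed
    have s2: "(\<Sum>w\<in>psi (tau e) - {v}. f w - f v) = (\<Sum>w\<in>psi e - {v}. f w - f v)" if v: "v \<in> C" for v
    proof -
      have vV: "v \<in> V" using v CRV RVV by auto
      have "sigma ` (psi e - {v}) = sigma ` psi e - sigma ` {v}"
        using pV[OF e] vV by (intro inj_on_image_set_diff[OF injV]) auto
      then have "psi (tau e) - {v} = sigma ` (psi e - {v})"
        unfolding pt[OF e] using Creal[OF v] by simp
      moreover have inj: "inj_on sigma (psi e - {v})" using injV pV[OF e] by (meson Diff_subset inj_on_subset subset_trans)
      ultimately have "(\<Sum>w\<in>psi (tau e) - {v}. f w - f v) = (\<Sum>w\<in>psi e - {v}. f (sigma w) - f v)"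
        by (simp add: sum.reindex)
      also have "\<dots> = (\<Sum>w\<in>psi e - {v}. f w - f v)"
        using freal pV[OF e] by (intro sum.cong) auto
      finally show ?thesis .
    qed
    show ?thesis unfolding h_def s1 by (rule sum.cong[OF refl]) (simp add: s2)
  qed
  have hfix: "h e = 0" if e: "e \<in> E" and fx: "tau e = e" for e
  proof (cases "card (psi e) = 1")
    case True
    then obtain a where a: "psi e = {a}" by (meson card_1_singletonE)
    show ?thesis unfolding h_def a by (intro sum.neutral) auto
  next
    case False
    then have "card (psi e) = 2" using pc[OF e] by auto
    then obtain a b where ab: "psi e = {a, b}" "a \<noteq> b" by (meson card_2_iff)
    have aV: "a \<in> V" and bV: "b \<in> V" using pV[OF e] ab by auto
    have "psi (tau e) = sigma ` psi e" by (rule pt[OF e])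
    then have "{a, b} = sigma ` {a, b}" by (simp only: fx ab)
    then have sab: "sigma ` {a, b} = {a, b}" by (rule sym)
    have cross: False if xy: "{x, y} = {a, b}" "x \<noteq> y" "x \<in> C" "y \<notin> C" for x y
    proof -
      have xin: "x \<in> {a, b}" and yin: "y \<in> {a, b}" unfolding xy(1)[symmetric] by simp_all
      have xV: "x \<in> V" using xin aV bV by blast
      have yV: "y \<in> V" using yin aV bV by blast
      have sx: "sigma x = x" using Creal xy(3) .
      have "sigma ` {x, y} = {x, y}" unfolding xy(1) by (rule sab)
      then have "sigma y \<in> {x, y}" by blast
      moreover have "sigma y \<noteq> x"
      proof
        assume "sigma y = x"
        then have "sigma (sigma y) = sigma x" by simp
        then show False using sV[OF yV] sx xy(2) by simp
      qed
      ultimately have sy: "sigma y = y" by auto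
      have yRV: "y \<in> RV" and xRV: "x \<in> RV" using sy sx yV xV unfolding RV_def real_vertices_def by auto
      have eRE: "e \<in> RE" unfolding RE_def real_edges_def
        using e fx ab xy(1) xRV yRV unfolding RV_def by auto
      have "(x, y) \<in> adj RV RE psi" unfolding adj_def using xRV yRV eRE ab xy(1) by auto
      moreover have "(v0, x) \<in> (adj RV RE psi)\<^sup>*" using xy(3) Cdef by auto
      ultimately have "(v0, y) \<in> (adj RV RE psi)\<^sup>*" by (rule rtrancl.rtrancl_into_rtrancl[rotated])
      then have "y \<in> C" using Cdef yRV by simp
      then show False using xy(4) by simp
    qed
    consider "a \<in> C" "b \<in> C" | "a \<notin> C" "b \<notin> C" | "a \<in> C" "b \<notin> C" | "a \<notin> C" "b \<in> C" by blast
    then show ?thesis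
    proof cases
      case 1
      then have "{v\<in>C. v \<in> psi e} = {a, b}" using ab by auto
      moreover have "{a, b} - {b} = {a}" using ab(2) by auto
      ultimately show ?thesis unfolding h_def using ab by simp
    next
      case 2
      then have "{v\<in>C. v \<in> psi e} = {}" using ab by auto
      then show ?thesis unfolding h_def by (simp only: sum.empty)
    next
      case 3 then show ?thesis using cross[OF refl ab(2)] by blast
    next
      case 4
      have "{b, a} = {a, b}" by (rule insert_commute)
      then show ?thesis using cross[of b a] 4 ab(2) by blast
    qed
  qed
  have "even (sum h E)" using even_sum_inv[OF finE] tE hinv hfix by blast
  moreover have "(\<Sum>v\<in>C. D1 v) - (\<Sum>v\<in>C. D2 v) = - sum h E" using eqs by simp
  ultimately show ?thesis unfolding cong_iff_dvd_diff by simp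
qed

end
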